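(* Consider the sub-$\ell^\infty$ structure on $\mathbb{R}^3$ defined by $Y_1=\partial_x+\partial_y+y^2\partial_z$, $Y_2=\partial_x-\partial_y+y^2\partial_z$. If an extremal pair $(\lambda,\gamma)$ restricted to an open interval $I$ is an abnormal arc and $\gamma$ is not constant on $I$, then $u_1=u_2$ a.e. on $I$ and $\gamma(I)$ is contained in a line $\{y=0,\ z=z_0\}$ for some $z_0\in\mathbb{R}$. Conversely, every admissible trajectory contained in such a line admits an extremal lift whose restriction to its whole domain is an abnormal arc.
   Context: Sub-$\ell^\infty$ structure defined by smooth vector fields $X_1,\dots,X_k$ on a manifold $M$ (here $X_1=Y_1$, $X_2=Y_2$): an admissible trajectory is an absolutely continuous curve $\gamma:[0,T]\to M$ together with a measurable control $u=(u_1,\dots,u_k):[0,T]\to\mathbb{R}^k$ with $|u_i(t)|\le1$ for all $i$ and a.e. $t$, such that $\dot\gamma(t)=\sum_i u_i(t)X_i(\gamma(t))$ for a.e. $t$. An extremal pair is a pair $(\lambda,\gamma)$ where $\gamma$ is admissible with control $u$ and $\lambda:[0,T]\to T^*M$ is absolutely continuous with $\lambda(t)\in T^*_{\gamma(t)}M\setminus\{0\}$, such that, with $\mathcal H(\lambda,p,u)=\sum_i u_i\langle\lambda,X_i(p)\rangle$, in canonical coordinates $\dot\lambda=-\partial_p\mathcal H(\lambda,\gamma,u)$, $\dot\gamma=\partial_\lambda\mathcal H(\lambda,\gamma,u)$ a.e., and there is a constant $\lambda_0\ge0$ with $\sum_iu_i(t)\langle\lambda(t),X_i(\gamma(t))\rangle=\sum_i|\langle\lambda(t),X_i(\gamma(t))\rangle|=\lambda_0$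 for a.e. $t$; $\gamma$ is then an extremal trajectory and $\lambda$ an extremal lift. The switching functions are $\varphi_j(t)=\langle\lambda(t),X_j(\gamma(t))\rangle$. The restriction of an extremal pair to an open interval $I$ is an abnormal arc if $\varphi_j\equiv0$ on $I$ for all $j=1,\dots,k$. *)

theory Defs
  imports "HOL-Analysis.Analysis"
begin

definition abs_cont_on :: "real set \<Rightarrow> (real \<Rightarrow> 'a::real_normed_vector) \<Rightarrow> bool" where
  "abs_cont_on S f \<longleftrightarrow>
     (\<forall>\<epsilon>>0. \<exists>\<delta>>0. \<forall>(n::nat) (a::nat \<Rightarrow> real) (b::nat \<Rightarrow> real).
        (\<forall>i<n. a i \<in> S \<and> b i \<in> S \<and> a i \<le> b i) \<and>
        (\<forall>i. Suc i < n \<longrightarrow> b i \<le> a (Suc i)) \<and>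
        (\<Sum>i<n. b i - a i) < \<delta>
        \<longrightarrow> (\<Sum>i<n. norm (f (b i) - f (a i))) < \<epsilon>)"

text \<open>Sub-l-infinity structure on a Euclidean space 'a given by k vector fields X 0, ..., X (k-1).
  Covectors are identified with vectors via the inner product. Controls u i, i<k.\<close>
definition admissible ::
  "(nat \<Rightarrow> 'a::euclidean_space \<Rightarrow> 'a) \<Rightarrow> nat \<Rightarrow> real \<Rightarrow> (real \<Rightarrow> 'a) \<Rightarrow> (nat \<Rightarrow> real \<Rightarrow> real) \<Rightarrow> bool" where
  "admissible X k T \<gamma> u \<longleftrightarrow>
     abs_cont_on {0..T} \<gamma> \<and>
     (\<forall>i<k. u i \<in> borel_measurable (lebesgue_on {0..T})) \<and>
     (AE t in lebesgue_on {0..T}. \<forall>i<k. \<bar>u i t\<bar> \<le> 1) \<and>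
     (AE t in lebesgue_on {0..T}. (\<gamma> has_vector_derivative (\<Sum>i<k. u i t *\<^sub>R X i (\<gamma> t))) (at t))"

definition ctrlH :: "(nat \<Rightarrow> 'a::euclidean_space \<Rightarrow> 'a) \<Rightarrow> nat \<Rightarrow> 'a \<Rightarrow> 'a \<Rightarrow> (nat \<Rightarrow> real) \<Rightarrow> real" where
  "ctrlH X k l p w = (\<Sum>i<k. w i * inner l (X i p))"

text \<open>The adjoint equation lambda' = - d_p H is expressed by: the gradient g of
  p \<mapsto> H(lambda(t), p, u(t)) at gamma(t) exists and lambda'(t) = -g.
  The state equation gamma' = d_lambda H is the admissibility equation.\<close>
definition extremal_pair ::
  "(nat \<Rightarrow> 'a::euclidean_space \<Rightarrow> 'a) \<Rightarrow> nat \<Rightarrow> real \<Rightarrow> (real \<Rightarrow> 'a) \<Rightarrow> (real \<Rightarrow> 'a) \<Rightarrow> (nat \<Rightarrow> real \<Rightarrow> real) \<Rightarrow> bool" where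
  "extremal_pair X k T lam \<gamma> u \<longleftrightarrow>
     admissible X k T \<gamma> u \<and>
     abs_cont_on {0..T} lam \<and>
     (\<forall>t\<in>{0..T}. lam t \<noteq> 0) \<and>
     (AE t in lebesgue_on {0..T}. \<exists>g.
        ((\<lambda>p. ctrlH X k (lam t) p (\<lambda>i. u i t)) has_derivative (\<lambda>h. inner g h)) (at (\<gamma> t)) \<and>
        (lam has_vector_derivative (- g)) (at t)) \<and>
     (\<exists>lam0\<ge>0. AE t in lebesgue_on {0..T}.
        (\<Sum>i<k. u i t * inner (lam t) (X i (\<gamma> t))) = (\<Sum>i<k. \<bar>inner (lam t) (X i (\<gamma> t))\<bar>) \<and>
        (\<Sum>i<k. \<bar>inner (lam t) (X i (\<gamma> t))\<bar>) = lam0)"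

definition switching :: "(nat \<Rightarrow> 'a::euclidean_space \<Rightarrow> 'a) \<Rightarrow> (real \<Rightarrow> 'a) \<Rightarrow> (real \<Rightarrow> 'a) \<Rightarrow> nat \<Rightarrow> real \<Rightarrow> real" where
  "switching X lam \<gamma> j t = inner (lam t) (X j (\<gamma> t))"

definition abnormal_arc ::
  "(nat \<Rightarrow> 'a::euclidean_space \<Rightarrow> 'a) \<Rightarrow> nat \<Rightarrow> real \<Rightarrow> (real \<Rightarrow> 'a) \<Rightarrow> (real \<Rightarrow> 'a) \<Rightarrow> (nat \<Rightarrow> real \<Rightarrow> real) \<Rightarrow> real \<Rightarrow> real \<Rightarrow> bool" where
  "abnormal_arc X k T lam \<gamma> u a b \<longleftrightarrow>
     extremal_pair X k T lam \<gamma> u \<and> 0 \<le> a \<and> a < b \<and> b \<le> T \<and>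
     (\<forall>t\<in>{a<..<b}. \<forall>j<k. switching X lam \<gamma> j t = 0)"

text \<open>Points of R^3 are triples (x, y, z). The fields Y_1 = d_x + d_y + y^2 d_z and
  Y_2 = d_x - d_y + y^2 d_z are indexed as Y 0 and Y 1.\<close>
definition Y :: "nat \<Rightarrow> real \<times> real \<times> real \<Rightarrow> real \<times> real \<times> real" where
  "Y i p = (case p of (x, y, z) \<Rightarrow> if i = 0 then (1, 1, y^2) else (1, -1, y^2))"

end

theory Submission
  imports Defs
begin



lemma chain_le:
  fixes A B :: "nat \<Rightarrow> real"
  assumes "\<forall>i<n. A i \<le> B i" "\<forall>i. Suc i < n \<longrightarrow> B i \<le> A (Suc i)"
  shows "i < j \<Longrightarrow> j < n \<Longrightarrow> B i \<le> A j"
proof (induction j)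
  case 0 then show ?case by simp
next
  case (Suc j)
  show ?case
  proof (cases "i = j")
    case True then show ?thesis using assms Suc by auto
  next
    case False
    then have "B i \<le> A j" using Suc by auto
    also have "\<dots> \<le> B j" using assms Suc by auto
    also have "\<dots> \<le> A (Suc j)" using assms Suc by auto
    finally show ?thesis .
  qed
qed

lemma sum_intervals_le_measure:
  fixes A B :: "nat \<Rightarrow> real"
  assumes U: "U \<in> lmeasurable" and iv: "\<forall>i<n. A i \<le> B i \<and> {A i..B i} \<subseteq> U"
    and ch: "\<forall>i. Suc i < n \<longrightarrow> B i \<le> A (Suc i)"
  shows "\<forall>c. (\<forall>i<n. B i \<le> c) \<longrightarrow> (\<Sum>i<n. B i - A i) \<le> measure lebesgue (U \<inter> {..<c})"
  using iv ch
proof (induction n)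
  case 0
  then show ?case by simp
next
  case (Suc n)
  show ?case
  proof (intro allI impI)
    fix c assume c: "\<forall>i<Suc n. B i \<le> c"
    have IH: "(\<Sum>i<n. B i - A i) \<le> measure lebesgue (U \<inter> {..<A n})"
    proof -
      have "\<forall>i<n. B i \<le> A n"
        using chain_le[of "Suc n" A B] Suc.prems by auto
      then show ?thesis using Suc by auto
    qed
    have m1: "U \<inter> {..<A n} \<in> lmeasurable" using U by (intro fmeasurable_Int_fmeasurable) auto
    have m2: "{A n..<B n} \<in> lmeasurable" by (rule measurable_convex) auto
    have "measure lebesgue ((U \<inter> {..<A n}) \<union> {A n..<B n}) = measure lebesgue (U \<inter> {..<A n}) + measure lebesgue ({A n..<B n} - (U \<inter> {..<A n}))"
      using measure_Un2[OF m1 m2] .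
    also have "{A n..<B n} - (U \<inter> {..<A n}) = {A n..<B n}" by auto
    also have "measure lebesgue {A n..<B n} = B n - A n" using Suc.prems by simp
    finally have eq: "measure lebesgue ((U \<inter> {..<A n}) \<union> {A n..<B n}) = measure lebesgue (U \<inter> {..<A n}) + (B n - A n)" .
    have "measure lebesgue ((U \<inter> {..<A n}) \<union> {A n..<B n}) \<le> measure lebesgue (U \<inter> {..<c})"
    proof (rule measure_mono_fmeasurable)
      have "A n \<le> B n" "{A n..B n} \<subseteq> U" "B n \<le> c" using Suc.prems c by auto
      then show "U \<inter> {..<A n} \<union> {A n..<B n} \<subseteq> U \<inter> {..<c}"
        by auto
      show "U \<inter> {..<A n} \<union> {A n..<B n} \<in> sets lebesgue" using m1 m2 by auto
      show "U \<inter> {..<c} \<in> lmeasurable" using U by (intro fmeasurable_Int_fmeasurable) auto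
    qed
    then show "(\<Sum>i<Suc n. B i - A i) \<le> measure lebesgue (U \<inter> {..<c})"
      using IH eq by simp
  qed
qed

lemma deriv0_bound:
  fixes f :: "real \<Rightarrow> real"
  assumes "(f has_real_derivative 0) (at s)" "e > 0"
  shows "\<exists>r>0. \<forall>t. \<bar>t - s\<bar> < r \<longrightarrow> \<bar>f t - f s\<bar> \<le> e * \<bar>t - s\<bar>"
proof -
  have "((\<lambda>y. (f y - f s) / (y - s)) \<longlongrightarrow> 0) (at s)"
    using assms(1) by (simp add: has_field_derivative_iff)
  from LIM_D[OF this assms(2)] obtain r where r: "r > 0"
    and h: "\<And>x. x \<noteq> s \<and> norm (x - s) < r \<Longrightarrow> norm ((f x - f s) / (x - s) - 0) < e"
    by blast
  have "\<bar>f t - f s\<bar> \<le> e * \<bar>t - s\<bar>" if "\<bar>t - s\<bar> < r" for t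
  proof (cases "t = s")
    case True then show ?thesis by simp
  next
    case False
    then have "\<bar>(f t - f s) / (t - s)\<bar> < e" using h[of t] that by auto
    then have "\<bar>f t - f s\<bar> / \<bar>t - s\<bar> < e" by (simp add: abs_divide)
    then show ?thesis using False by (simp add: divide_less_eq)
  qed
  then show ?thesis using r by blast
qed

lemma ac_zero_deriv_const:
  fixes f :: "real \<Rightarrow> real"
  assumes ac: "abs_cont_on S f" and sub: "{a..b} \<subseteq> S" and ab: "a \<le> b"
    and N: "N \<in> null_sets lebesgue"
    and d: "\<And>t. t \<in> {a..b} \<Longrightarrow> t \<notin> N \<Longrightarrow> (f has_real_derivative 0) (at t)"
  shows "f b = f a"
proof -
  have main: "\<bar>f b - f a\<bar> < \<epsilon> * (b - a) + \<epsilon>" if \<epsilon>: "\<epsilon> > 0" for \<epsilon>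
  proof -
    obtain \<delta> where \<delta>: "\<delta> > 0" and acd: "\<And>n A B. (\<forall>i<n. A i \<in> S \<and> B i \<in> S \<and> A i \<le> B i) \<Longrightarrow>
        (\<forall>i. Suc i < n \<longrightarrow> B i \<le> A (Suc i)) \<Longrightarrow> (\<Sum>i<n. B i - A i) < \<delta> \<Longrightarrow>
        (\<Sum>i<n. norm (f (B i) - f (A i))) < \<epsilon>"
      using spec[OF ac[unfolded abs_cont_on_def], of \<epsilon>] \<epsilon> by auto
    have Nl: "N \<in> sets lebesgue" using N by auto
    obtain U where U: "open U" "N \<subseteq> U" "U - N \<in> lmeasurable" "emeasure lebesgue (U - N) < ennreal \<delta>"
      using sets_lebesgue_outer_open[OF Nl \<delta>] by blast
    have Ueq: "U = (U - N) \<union> N" using U by auto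
    have Nf: "N \<in> lmeasurable" using N by (auto simp: fmeasurable_def)
    have Ul: "U \<in> lmeasurable" using Ueq U(3) Nf by (metis fmeasurable.Un)
    have "measure lebesgue U = measure lebesgue (U - N)"
      using Ueq U(3) N measure_Un_null_set by (metis fmeasurableD)
    also have "\<dots> < \<delta>"
      using U(3,4) \<delta> by (simp add: emeasure_eq_measure2 ennreal_less_iff)
    finally have Um: "measure lebesgue U < \<delta>" .
    define P where "P c \<longleftrightarrow> (\<exists>n A B. (\<forall>i<n. a \<le> A i \<and> A i \<le> B i \<and> B i \<le> c \<and> {A i..B i} \<subseteq> U) \<and>
        (\<forall>i. Suc i < n \<longrightarrow> B i \<le> A (Suc i)) \<and>
        \<bar>f c - f a\<bar> \<le> \<epsilon> * (c - a) + (\<Sum>i<n. \<bar>f (B i) - f (A i)\<bar>))" for c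
    have bound: "\<bar>f c - f a\<bar> < \<epsilon> * (c - a) + \<epsilon>" if "P c" "c \<le> b" for c
    proof -
      from that(1) obtain n A B where iv: "\<forall>i<n. a \<le> A i \<and> A i \<le> B i \<and> B i \<le> c \<and> {A i..B i} \<subseteq> U"
        and ch: "\<forall>i. Suc i < n \<longrightarrow> B i \<le> A (Suc i)"
        and le: "\<bar>f c - f a\<bar> \<le> \<epsilon> * (c - a) + (\<Sum>i<n. \<bar>f (B i) - f (A i)\<bar>)"
        unfolding P_def by blast
      have "(\<Sum>i<n. B i - A i) \<le> measure lebesgue (U \<inter> {..<c})"
        using sum_intervals_le_measure[OF Ul, of n A B] iv ch by auto
      also have "\<dots> \<le> measure lebesgue U"
        using Ul by (intro measure_mono_fmeasurable) auto
      finally have "(\<Sum>i<n. B i - A i) < \<delta>" using Um by linarith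
      moreover have "\<forall>i<n. A i \<in> S \<and> B i \<in> S \<and> A i \<le> B i"
        using iv sub that(2) by (auto simp: subset_iff)
      ultimately have "(\<Sum>i<n. norm (f (B i) - f (A i))) < \<epsilon>" using acd ch by blast
      then show ?thesis using le by simp
    qed
    have Pa: "P a" unfolding P_def by (rule exI[of _ 0]) simp
    have E1: "P c'" if "P c" "a \<le> c" "c \<le> c'" "{c..c'} \<subseteq> U" for c c'
    proof -
      from that(1) obtain n A B where iv: "\<forall>i<n. a \<le> A i \<and> A i \<le> B i \<and> B i \<le> c \<and> {A i..B i} \<subseteq> U"
        and ch: "\<forall>i. Suc i < n \<longrightarrow> B i \<le> A (Suc i)"
        and le: "\<bar>f c - f a\<bar> \<le> \<epsilon> * (c - a) + (\<Sum>i<n. \<bar>f (B i) - f (A i)\<bar>)"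
        unfolding P_def by blast
      define A' where "A' i = (if i < n then A i else c)" for i
      define B' where "B' i = (if i < n then B i else c')" for i
      have iv': "\<forall>i<Suc n. a \<le> A' i \<and> A' i \<le> B' i \<and> B' i \<le> c' \<and> {A' i..B' i} \<subseteq> U"
        using iv that by (auto simp: A'_def B'_def less_Suc_eq)
      have ch': "\<forall>i. Suc i < Suc n \<longrightarrow> B' i \<le> A' (Suc i)"
        using iv ch by (auto simp: A'_def B'_def less_Suc_eq)
      have sm: "(\<Sum>i<Suc n. \<bar>f (B' i) - f (A' i)\<bar>) = (\<Sum>i<n. \<bar>f (B i) - f (A i)\<bar>) + \<bar>f c' - f c\<bar>"
        by (simp add: A'_def B'_def)
      have "\<bar>f c' - f a\<bar> \<le> \<bar>f c - f a\<bar> + \<bar>f c' - f c\<bar>" by linarith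
      also have "\<dots> \<le> \<epsilon> * (c' - a) + (\<Sum>i<Suc n. \<bar>f (B' i) - f (A' i)\<bar>)"
      proof -
        have "\<epsilon> * c \<le> \<epsilon> * c'" using \<epsilon> that(3) by (simp add: mult_left_mono)
        then show ?thesis using le sm by (simp add: algebra_simps)
      qed
      finally show ?thesis unfolding P_def using iv' ch' by blast
    qed
    have E2: "P c'" if "P c" "\<bar>f c' - f c\<bar> \<le> \<epsilon> * (c' - c)" "c \<le> c'" for c c'
    proof -
      from that(1) obtain n A B where iv: "\<forall>i<n. a \<le> A i \<and> A i \<le> B i \<and> B i \<le> c \<and> {A i..B i} \<subseteq> U"
        and ch: "\<forall>i. Suc i < n \<longrightarrow> B i \<le> A (Suc i)"
        and le: "\<bar>f c - f a\<bar> \<le> \<epsilon> * (c - a) + (\<Sum>i<n. \<bar>f (B i) - f (A i)\<bar>)"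
        unfolding P_def by blast
      have iv': "\<forall>i<n. a \<le> A i \<and> A i \<le> B i \<and> B i \<le> c' \<and> {A i..B i} \<subseteq> U"
        using iv that(3) by force
      have "\<bar>f c' - f a\<bar> \<le> \<bar>f c - f a\<bar> + \<bar>f c' - f c\<bar>" by linarith
      also have "\<dots> \<le> \<epsilon> * (c' - a) + (\<Sum>i<n. \<bar>f (B i) - f (A i)\<bar>)"
        using le that(2) by (simp add: algebra_simps)
      finally show ?thesis unfolding P_def using iv' ch by blast
    qed
    define D where "D = {c \<in> {a..b}. \<forall>c'\<in>{a..c}. P c'}"
    have aD: "a \<in> D" using ab Pa by (auto simp: D_def)
    have bdd: "bdd_above D" by (rule bdd_aboveI[of _ b]) (auto simp: D_def)
    define s where "s = Sup D"
    have as: "a \<le> s" using cSup_upper[OF aD bdd] s_def by simp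
    have sb: "s \<le> b" unfolding s_def using aD by (intro cSup_least) (auto simp: D_def)
    have below: "P c'" if h1: "a \<le> c'" and h2: "c' < s" for c'
    proof -
      obtain x where "x \<in> D" "c' < x" using less_cSup_iff[OF _ bdd, of c'] aD h2 s_def by auto
      then show ?thesis using h1 by (auto simp: D_def)
    qed
    have pick: "\<exists>c. P c \<and> a \<le> c \<and> c \<le> s \<and> s - r < c" if "r > 0" for r
    proof (cases "s = a")
      case True then show ?thesis using Pa that by auto
    next
      case False
      define c where "c = max a (s - r/2)"
      have "a \<le> c" "c < s" "s - r < c" using False as that by (auto simp: c_def)
      then show ?thesis using below by (intro exI[of _ c]) auto
    qed
    have near: "\<exists>r>0. \<forall>c'. s \<le> c' \<longrightarrow> c' < s + r \<longrightarrow> P c'"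
    proof (cases "s \<in> N")
      case True
      then have "s \<in> U" using U by auto
      then obtain r where r: "r > 0" "ball s r \<subseteq> U" using U(1) open_contains_ball by blast
      obtain c where c: "P c" "a \<le> c" "c \<le> s" "s - r < c" using pick[OF r(1)] by blast
      have "P c'" if "s \<le> c'" "c' < s + r" for c'
      proof (rule E1[OF c(1,2)])
        show "c \<le> c'" using c that by simp
        have "{c..c'} \<subseteq> ball s r" using c that by (auto simp: dist_real_def)
        then show "{c..c'} \<subseteq> U" using r by blast
      qed
      then show ?thesis using r by blast
    next
      case False
      then have "(f has_real_derivative 0) (at s)" using d as sb by auto
      from deriv0_bound[OF this \<epsilon>] obtain r where r: "r > 0"
        and rb: "\<And>t. \<bar>t - s\<bar> < r \<Longrightarrow> \<bar>f t - f s\<bar> \<le> \<epsilon> * \<bar>t - s\<bar>" by blast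
      obtain c where c: "P c" "a \<le> c" "c \<le> s" "s - r < c" using pick[OF r(1)] by blast
      have "P c'" if "s \<le> c'" "c' < s + r" for c'
      proof (rule E2[OF c(1)])
        show "c \<le> c'" using c that by simp
        have 1: "\<bar>f c' - f s\<bar> \<le> \<epsilon> * (c' - s)" using rb[of c'] that by auto
        have 2: "\<bar>f c - f s\<bar> \<le> \<epsilon> * (s - c)" using rb[of c] c by auto
        have "\<bar>f c' - f c\<bar> \<le> \<bar>f c' - f s\<bar> + \<bar>f c - f s\<bar>" by linarith
        also have "\<dots> \<le> \<epsilon> * (c' - c)" using 1 2 by (simp add: algebra_simps)
        finally show "\<bar>f c' - f c\<bar> \<le> \<epsilon> * (c' - c)" .
      qed
      then show ?thesis using r by blast
    qed
    then obtain r where r: "r > 0" and rP: "\<And>c'. s \<le> c' \<Longrightarrow> c' < s + r \<Longrightarrow> P c'" by blast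
    have "s = b"
    proof (rule ccontr)
      assume "s \<noteq> b"
      then have sb': "s < b" using sb by simp
      define m where "m = min b (s + r/2)"
      have "m \<in> D" unfolding D_def
      proof (intro CollectI conjI ballI)
        show "m \<in> {a..b}" using as sb' r by (auto simp: m_def)
        fix c' assume "c' \<in> {a..m}"
        then show "P c'" using below rP r by (cases "c' < s") (auto simp: m_def)
      qed
      then have "m \<le> s" using cSup_upper[OF _ bdd] s_def by simp
      then show False using sb' r by (auto simp: m_def)
    qed
    then have "P b" using rP r by simp
    then show ?thesis using bound by simp
  qed
  show ?thesis
  proof (rule ccontr)
    assume "f b \<noteq> f a"
    define e where "e = \<bar>f b - f a\<bar> / (2 * (b - a + 1))"
    have pos: "\<bar>f b - f a\<bar> > 0" using \<open>f b \<noteq> f a\<close> by simp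
    have e: "e > 0" using pos ab by (simp add: e_def)
    have q: "b - a + 1 > 0" using ab by simp
    have "e * (b - a + 1) = \<bar>f b - f a\<bar> / 2" unfolding e_def using q by (simp add: field_simps)
    then have "e * (b - a) + e = \<bar>f b - f a\<bar> / 2" by (simp add: algebra_simps)
    then show False using main[OF e] pos by (smt (verit) field_sum_of_halves)
  qed
qed



lemma ctrlH_Y: "ctrlH Y 2 l p w = (w 0 + w 1) * fst l + (w 0 - w 1) * fst (snd l) + (w 0 + w 1) * snd (snd l) * (fst (snd p))^2"
  by (cases l; cases p) (simp add: ctrlH_def Y_def numeral_2_eq_2 algebra_simps)

lemma H_deriv: "((\<lambda>p. ctrlH Y 2 l p w) has_derivative (\<lambda>h. (w 0 + w 1) * snd (snd l) * (2 * fst (snd p0) * fst (snd h)))) (at p0)"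
  unfolding ctrlH_Y
  by (auto intro!: derivative_eq_intros simp: algebra_simps)

lemma sw_Y: "switching Y lam \<gamma> 0 t = fst (lam t) + fst (snd (lam t)) + snd (snd (lam t)) * (fst (snd (\<gamma> t)))^2"
  "switching Y lam \<gamma> 1 t = fst (lam t) - fst (snd (lam t)) + snd (snd (lam t)) * (fst (snd (\<gamma> t)))^2"
  by (cases "lam t"; cases "\<gamma> t"; simp add: switching_def Y_def)+

lemma dyn_Y: "(\<Sum>i<2. w i *\<^sub>R Y i p) = (w 0 + w 1, w 0 - w 1, (w 0 + w 1) * (fst (snd p))^2)"
  by (cases p) (simp add: Y_def numeral_2_eq_2 algebra_simps)

lemma vd_fst: "(g has_vector_derivative v) (at t) \<Longrightarrow> ((\<lambda>t. fst (g t)) has_real_derivative fst v) (at t)"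
  unfolding has_vector_derivative_def has_field_derivative_def
  by (drule has_derivative_fst) (auto simp: fun_eq_iff mult.commute elim: has_derivative_eq_rhs)

lemma vd_snd: "(g has_vector_derivative v) (at t) \<Longrightarrow> ((\<lambda>t. snd (g t)) has_vector_derivative snd v) (at t)"
  unfolding has_vector_derivative_def
  by (drule has_derivative_snd) simp

lemma vd_fst_snd: "(g has_vector_derivative v) (at t) \<Longrightarrow> ((\<lambda>t. fst (snd (g t))) has_real_derivative fst (snd v)) (at t)"
  by (rule vd_fst[OF vd_snd])

lemma vd_snd_snd: "(g has_vector_derivative v) (at t) \<Longrightarrow> ((\<lambda>t. snd (snd (g t))) has_real_derivative snd (snd v)) (at t)"
  using vd_snd[OF vd_snd, of g v t] by (simp add: has_real_derivative_iff_has_vector_derivative)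

lemma ac_lip:
  assumes "abs_cont_on S f" "\<And>x y. norm (g x - g y) \<le> norm (x - y)"
  shows "abs_cont_on S (\<lambda>t. g (f t))"
  unfolding abs_cont_on_def
proof (intro allI impI)
  fix e :: real assume e: "e > 0"
  then obtain d where d: "d > 0" and H: "\<forall>n a b. (\<forall>i<n. a i \<in> S \<and> b i \<in> S \<and> a i \<le> b i) \<and>
        (\<forall>i. Suc i < n \<longrightarrow> b i \<le> a (Suc i)) \<and> (\<Sum>i<n. b i - a i) < d \<longrightarrow>
        (\<Sum>i<n. norm (f (b i) - f (a i))) < e"
    using spec[OF assms(1)[unfolded abs_cont_on_def], of e] by auto
  show "\<exists>d>0. \<forall>n a b. (\<forall>i<n. a i \<in> S \<and> b i \<in> S \<and> a i \<le> b i) \<and>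
        (\<forall>i. Suc i < n \<longrightarrow> b i \<le> a (Suc i)) \<and> (\<Sum>i<n. b i - a i) < d \<longrightarrow>
        (\<Sum>i<n. norm (g (f (b i)) - g (f (a i)))) < e"
  proof (intro exI[of _ d] conjI allI impI d)
    fix n a b assume h: "(\<forall>i<n. a i \<in> S \<and> b i \<in> S \<and> a i \<le> b i) \<and>
        (\<forall>i. Suc i < n \<longrightarrow> b i \<le> a (Suc i)) \<and> (\<Sum>i<n. b i - a i) < d"
    have "(\<Sum>i<n. norm (g (f (b i)) - g (f (a i)))) \<le> (\<Sum>i<n. norm (f (b i) - f (a i)))"
      by (intro sum_mono assms(2))
    also have "\<dots> < e" using H h by blast
    finally show "(\<Sum>i<n. norm (g (f (b i)) - g (f (a i)))) < e" .
  qed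
qed

lemma nfst: "norm (fst z) \<le> norm z"
  using norm_fst_le[of "fst z" "snd z"] by simp
lemma nsnd: "norm (snd z) \<le> norm z"
  using norm_snd_le[of "snd z" "fst z"] by simp

lemma lip_fst: "norm (fst x - fst (y::'a::real_normed_vector \<times> 'b::real_normed_vector)) \<le> norm (x - y)"
  using nfst[of "x - y"] by simp
lemma lip_fst_snd: "norm (fst (snd x) - fst (snd (y::'a::real_normed_vector \<times> 'b::real_normed_vector \<times> 'c::real_normed_vector))) \<le> norm (x - y)"
proof -
  have "norm (fst (snd (x-y))) \<le> norm (x-y)" using nfst[of "snd (x-y)"] nsnd[of "x-y"] by linarith
  then show ?thesis by simp
qed
lemma lip_snd_snd: "norm (snd (snd x) - snd (snd (y::'a::real_normed_vector \<times> 'b::real_normed_vector \<times> 'c::real_normed_vector))) \<le> norm (x - y)"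
proof -
  have "norm (snd (snd (x-y))) \<le> norm (x-y)" using nsnd[of "snd (x-y)"] nsnd[of "x-y"] by linarith
  then show ?thesis by simp
qed


lemma AE_lebesgue_on_E:
  assumes "AE t in lebesgue_on {c..d::real}. P t"
  obtains N where "N \<in> null_sets lebesgue" "\<And>t. t \<in> {c..d} \<Longrightarrow> t \<notin> N \<Longrightarrow> P t"
proof -
  from AE_E[OF assms] obtain N where N0: "{x \<in> space (lebesgue_on {c..d}). \<not> P x} \<subseteq> N" "emeasure (lebesgue_on {c..d}) N = 0" "N \<in> sets (lebesgue_on {c..d})"
    by blast
  have N: "{x \<in> space (lebesgue_on {c..d}). \<not> P x} \<subseteq> N" "N \<in> null_sets (lebesgue_on {c..d})"
    using N0 by (auto intro: null_setsI)
  have m: "{c..d} \<in> sets lebesgue" by simp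
  have "N \<subseteq> {c..d} \<and> N \<in> null_sets lebesgue"
    using iffD1[OF null_sets_restrict_space[OF m] N(2)] .
  moreover have sp: "space (lebesgue_on {c..d}) = {c..d}" by simp
  have "P t" if "t \<in> {c..d}" "t \<notin> N" for t
    using N(1) that unfolding sp by blast
  ultimately show ?thesis using that by blast
qed

lemma AE_lebesgue_on_I:
  assumes "N \<in> null_sets lebesgue" "\<And>t. t \<in> {c<..<d::real} \<Longrightarrow> t \<notin> N \<Longrightarrow> P t"
  shows "AE t in lebesgue_on {c<..<d}. P t"
proof (rule AE_I')
  have m: "{c<..<d} \<in> sets lebesgue" by simp
  have "N \<inter> {c<..<d} \<in> null_sets lebesgue"
    using null_set_Int2[OF assms(1) m] .
  then show "N \<inter> {c<..<d} \<in> null_sets (lebesgue_on {c<..<d})"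
    using iffD2[OF null_sets_restrict_space[OF m]] by blast
  have sp: "space (lebesgue_on {c<..<d}) = {c<..<d}" by simp
  show "{x \<in> space (lebesgue_on {c<..<d}). \<not> P x} \<subseteq> N \<inter> {c<..<d}"
    unfolding sp using assms(2) by blast
qed



lemma loc_const_deriv:
  fixes f :: "real \<Rightarrow> real"
  assumes "(f has_real_derivative D) (at t)" "t \<in> {a<..<b}" "\<And>s. s \<in> {a<..<b} \<Longrightarrow> f s = c"
  shows "D = 0"
proof -
  have "((\<lambda>s. c) has_real_derivative D) (at t)"
    by (rule has_field_derivative_transform_within_open[OF assms(1) _ assms(2)]) (use assms(3) in auto)
  then show ?thesis using DERIV_const DERIV_unique by blast
qed

lemma const_on_open:
  fixes f :: "real \<Rightarrow> real"
  assumes ac: "abs_cont_on S f" and sub: "{a<..<b} \<subseteq> S" and N: "N \<in> null_sets lebesgue"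
   and d: "\<And>t. t \<in> {a<..<b} \<Longrightarrow> t \<notin> N \<Longrightarrow> (f has_real_derivative 0) (at t)"
   and s: "s \<in> {a<..<b}" and t: "t \<in> {a<..<b}"
  shows "f s = f t"
proof (cases "s \<le> t")
  case True
  have "f t = f s"
    by (rule ac_zero_deriv_const[OF ac _ True N]) (use sub s t d in auto)
  then show ?thesis by simp
next
  case False
  show "f s = f t"
    by (rule ac_zero_deriv_const[OF ac _ _ N]) (use sub s t d False in auto)
qed


lemma part1:
  assumes abn: "abnormal_arc Y 2 T lam \<gamma> u a b" and nc: "\<not> (\<exists>c. \<forall>t\<in>{a<..<b}. \<gamma> t = c)"
  shows "(AE t in lebesgue_on {a<..<b}. u 0 t = u 1 t) \<and>
         (\<exists>z0::real. \<forall>t\<in>{a<..<b}. fst (snd (\<gamma> t)) = 0 \<and> snd (snd (\<gamma> t)) = z0)"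
proof -
  from abn have ep: "extremal_pair Y 2 T lam \<gamma> u" and ab: "0 \<le> a" "a < b" "b \<le> T"
    and sw: "\<And>t j. t \<in> {a<..<b} \<Longrightarrow> j < 2 \<Longrightarrow> switching Y lam \<gamma> j t = 0"
    unfolding abnormal_arc_def by auto
  from ep have adm: "admissible Y 2 T \<gamma> u" and aclam: "abs_cont_on {0..T} lam"
    and lnz: "\<forall>t\<in>{0..T}. lam t \<noteq> 0"
    and adj: "AE t in lebesgue_on {0..T}. \<exists>g.
        ((\<lambda>p. ctrlH Y 2 (lam t) p (\<lambda>i. u i t)) has_derivative (\<lambda>h. inner g h)) (at (\<gamma> t)) \<and>
        (lam has_vector_derivative (- g)) (at t)"
    unfolding extremal_pair_def by auto
  from adm have acg: "abs_cont_on {0..T} \<gamma>"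
    and dyn: "AE t in lebesgue_on {0..T}. (\<gamma> has_vector_derivative (\<Sum>i<2. u i t *\<^sub>R Y i (\<gamma> t))) (at t)"
    unfolding admissible_def by auto
  obtain N1 where N1: "N1 \<in> null_sets lebesgue" and adjN: "\<And>t. t \<in> {0..T} \<Longrightarrow> t \<notin> N1 \<Longrightarrow> \<exists>g.
        ((\<lambda>p. ctrlH Y 2 (lam t) p (\<lambda>i. u i t)) has_derivative (\<lambda>h. inner g h)) (at (\<gamma> t)) \<and>
        (lam has_vector_derivative (- g)) (at t)"
    by (rule AE_lebesgue_on_E[OF adj]) (rule that)
  obtain N2 where N2: "N2 \<in> null_sets lebesgue" and dynN: "\<And>t. t \<in> {0..T} \<Longrightarrow> t \<notin> N2 \<Longrightarrow>
        (\<gamma> has_vector_derivative (\<Sum>i<2. u i t *\<^sub>R Y i (\<gamma> t))) (at t)"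
    by (rule AE_lebesgue_on_E[OF dyn]) (rule that)
  define N where "N = N1 \<union> N2"
  have N: "N \<in> null_sets lebesgue" using N1 N2 unfolding N_def by (rule null_sets.Un)
  define xx where "xx t = fst (\<gamma> t)" for t
  define yy where "yy t = fst (snd (\<gamma> t))" for t
  define zz where "zz t = snd (snd (\<gamma> t))" for t
  define l1 where "l1 t = fst (lam t)" for t
  define l2 where "l2 t = fst (snd (lam t))" for t
  define l3 where "l3 t = snd (snd (lam t))" for t
  have acx: "abs_cont_on {0..T} xx" unfolding xx_def by (rule ac_lip[OF acg lip_fst])
  have acy: "abs_cont_on {0..T} yy" unfolding yy_def by (rule ac_lip[OF acg lip_fst_snd])
  have acz: "abs_cont_on {0..T} zz" unfolding zz_def by (rule ac_lip[OF acg lip_snd_snd])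
  have acl1: "abs_cont_on {0..T} l1" unfolding l1_def by (rule ac_lip[OF aclam lip_fst])
  have acl3: "abs_cont_on {0..T} l3" unfolding l3_def by (rule ac_lip[OF aclam lip_snd_snd])
  have sub: "{a<..<b} \<subseteq> {0..T}" using ab by auto
  have pw: "(l1 has_real_derivative 0) (at t) \<and> (l3 has_real_derivative 0) (at t) \<and>
      (l2 has_real_derivative - ((u 0 t + u 1 t) * l3 t * (2 * yy t))) (at t) \<and>
      (xx has_real_derivative (u 0 t + u 1 t)) (at t) \<and>
      (yy has_real_derivative (u 0 t - u 1 t)) (at t) \<and>
      (zz has_real_derivative ((u 0 t + u 1 t) * (yy t)^2)) (at t)"
    if t: "t \<in> {0..T}" "t \<notin> N" for t
  proof -
    obtain g where g1: "((\<lambda>p. ctrlH Y 2 (lam t) p (\<lambda>i. u i t)) has_derivative (\<lambda>h. inner g h)) (at (\<gamma> t))"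
      and g2: "(lam has_vector_derivative (- g)) (at t)"
      using adjN[of t] t by (auto simp: N_def)
    have "(\<lambda>h. inner g h) = (\<lambda>h. (u 0 t + u 1 t) * l3 t * (2 * yy t * fst (snd h)))"
      using has_derivative_unique[OF g1 H_deriv] unfolding l3_def yy_def by simp
    then have gi: "\<And>h. inner g h = (u 0 t + u 1 t) * l3 t * (2 * yy t * fst (snd h))"
      by metis
    obtain g1' g2' g3' where gg: "g = (g1', g2', g3')" by (cases g)
    have "g1' = 0" using gi[of "(1,0,0)"] by (simp add: gg)
    moreover have "g3' = 0" using gi[of "(0,0,1)"] by (simp add: gg)
    moreover have "g2' = (u 0 t + u 1 t) * l3 t * (2 * yy t)" using gi[of "(0,1,0)"] by (simp add: gg)
    ultimately have gval: "g = (0, (u 0 t + u 1 t) * l3 t * (2 * yy t), 0)" using gg by simp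
    have d1: "(l1 has_real_derivative 0) (at t)"
      using vd_fst[OF g2] unfolding l1_def gval by simp
    have d3: "(l3 has_real_derivative 0) (at t)"
      using vd_snd_snd[OF g2] unfolding l3_def gval by simp
    have d2: "(l2 has_real_derivative - ((u 0 t + u 1 t) * l3 t * (2 * yy t))) (at t)"
      using vd_fst_snd[OF g2] unfolding l2_def gval by simp
    have gd: "(\<gamma> has_vector_derivative (u 0 t + u 1 t, u 0 t - u 1 t, (u 0 t + u 1 t) * (yy t)^2)) (at t)"
      using dynN[of t] t dyn_Y[of "\<lambda>i. u i t" "\<gamma> t"] unfolding yy_def by (simp add: N_def)
    have dx: "(xx has_real_derivative (u 0 t + u 1 t)) (at t)"
      using vd_fst[OF gd] unfolding xx_def by simp
    have dy: "(yy has_real_derivative (u 0 t - u 1 t)) (at t)"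
      using vd_fst_snd[OF gd] unfolding yy_def by simp
    have dz: "(zz has_real_derivative ((u 0 t + u 1 t) * (yy t)^2)) (at t)"
      using vd_snd_snd[OF gd] unfolding zz_def by simp
    show ?thesis using d1 d2 d3 dx dy dz by blast
  qed
  have swt: "l2 t = 0 \<and> l1 t = - (l3 t * (yy t)^2) \<and> l3 t \<noteq> 0" if t: "t \<in> {a<..<b}" for t
  proof -
    have s0: "l1 t + l2 t + l3 t * (yy t)^2 = 0" using sw[OF t, of 0] sw_Y(1)[of lam \<gamma> t]
      by (simp add: l1_def l2_def l3_def yy_def)
    have s1: "l1 t - l2 t + l3 t * (yy t)^2 = 0" using sw[OF t, of 1] sw_Y(2)[of lam \<gamma> t]
      by (simp add: l1_def l2_def l3_def yy_def)
    have e2: "l2 t = 0" using s0 s1 by linarith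
    have e1: "l1 t = - (l3 t * (yy t)^2)" using s0 e2 by linarith
    have "l3 t \<noteq> 0"
    proof
      assume "l3 t = 0"
      then have "lam t = 0" using e1 e2 unfolding l1_def l2_def l3_def by (simp add: prod_eq_iff)
      then show False using lnz t sub by auto
    qed
    then show ?thesis using e1 e2 by blast
  qed
  have Ea: "(u 0 t + u 1 t) * yy t = 0" if t: "t \<in> {a<..<b}" "t \<notin> N" for t
  proof -
    have "- ((u 0 t + u 1 t) * l3 t * (2 * yy t)) = 0"
      by (rule loc_const_deriv[of l2 _ t a b 0]) (use pw[of t] t sub swt in auto)
    then show ?thesis using swt[OF t(1)] by simp
  qed
  define m where "m = (a + b) / 2"
  have m: "m \<in> {a<..<b}" using ab by (simp add: m_def)
  have zc: "zz t = zz m" if t: "t \<in> {a<..<b}" for t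
  proof (rule const_on_open[OF acz sub N _ t m])
    fix s assume s: "s \<in> {a<..<b}" "s \<notin> N"
    have "(u 0 s + u 1 s) * (yy s)^2 = 0" using Ea[OF s] by (simp add: power2_eq_square)
    then show "(zz has_real_derivative 0) (at s)" using pw[of s] s sub by auto
  qed
  have l1c: "l1 t = l1 m" if t: "t \<in> {a<..<b}" for t
    by (rule const_on_open[OF acl1 sub N _ t m]) (use pw sub in auto)
  have l3c: "l3 t = l3 m" if t: "t \<in> {a<..<b}" for t
    by (rule const_on_open[OF acl3 sub N _ t m]) (use pw sub in auto)
  have yc: "(yy t)^2 = (yy m)^2" if t: "t \<in> {a<..<b}" for t
  proof -
    have "l3 m * (yy t)^2 = l3 m * (yy m)^2"
      using swt[OF t] swt[OF m] l1c[OF t] l3c[OF t] by simp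
    then show ?thesis using swt[OF m] by simp
  qed
  have Eb: "yy t * (u 0 t - u 1 t) = 0" if t: "t \<in> {a<..<b}" "t \<notin> N" for t
  proof -
    have dy: "(yy has_real_derivative (u 0 t - u 1 t)) (at t)" using pw[of t] t sub by auto
    have "((\<lambda>s. (yy s)^2) has_real_derivative (of_nat 2 * ((u 0 t - u 1 t) * (yy t)^(2 - Suc 0)))) (at t)"
      by (rule DERIV_power[OF dy])
    then have "of_nat 2 * ((u 0 t - u 1 t) * (yy t)^(2 - Suc 0)) = 0"
      by (rule loc_const_deriv[OF _ t(1)]) (use yc in auto)
    then show ?thesis by auto
  qed
  show ?thesis
  proof (cases "yy m = 0")
    case True
    then have y0: "yy t = 0" if "t \<in> {a<..<b}" for t using yc[OF that] by simp
    have "u 0 t = u 1 t" if t: "t \<in> {a<..<b}" "t \<notin> N" for t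
    proof -
      have "u 0 t - u 1 t = 0"
        by (rule loc_const_deriv[of yy _ t a b 0]) (use pw[of t] t sub y0 in auto)
      then show ?thesis by simp
    qed
    then have "AE t in lebesgue_on {a<..<b}. u 0 t = u 1 t"
      by (rule AE_lebesgue_on_I[OF N])
    moreover have "\<forall>t\<in>{a<..<b}. fst (snd (\<gamma> t)) = 0 \<and> snd (snd (\<gamma> t)) = zz m"
      using y0 zc unfolding yy_def zz_def by auto
    ultimately show ?thesis by blast
  next
    case False
    then have yn: "yy t \<noteq> 0" if "t \<in> {a<..<b}" for t using yc[OF that] by auto
    have u0: "u 0 t + u 1 t = 0 \<and> u 0 t - u 1 t = 0" if t: "t \<in> {a<..<b}" "t \<notin> N" for t
      using Ea[OF t] Eb[OF t] yn[OF t(1)] by simp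
    have xc: "xx t = xx m" if t: "t \<in> {a<..<b}" for t
      by (rule const_on_open[OF acx sub N _ t m]) (use pw sub u0 in fastforce)
    have yc2: "yy t = yy m" if t: "t \<in> {a<..<b}" for t
      by (rule const_on_open[OF acy sub N _ t m]) (use pw sub u0 in fastforce)
    have "\<forall>t\<in>{a<..<b}. \<gamma> t = \<gamma> m"
      using xc yc2 zc unfolding xx_def yy_def zz_def by (auto simp: prod_eq_iff)
    then show ?thesis using nc by blast
  qed
qed



lemma ac_constant: "abs_cont_on S (\<lambda>t. c)"
  unfolding abs_cont_on_def by (auto intro: exI[of _ 1])

lemma inner_Y_001: "inner (0::real, 0::real, 1::real) (Y i p) = (fst (snd p))^2"
  by (cases p) (simp add: Y_def)

lemma part2:
  assumes adm: "admissible Y 2 T \<gamma> u" and T: "0 < T"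
    and line: "\<forall>t\<in>{0..T}. fst (snd (\<gamma> t)) = 0 \<and> snd (snd (\<gamma> t)) = z0"
  shows "\<exists>lam. abnormal_arc Y 2 T lam \<gamma> u 0 T"
proof -
  define lam where "lam = (\<lambda>t::real. (0::real, 0::real, 1::real))"
  have ep: "extremal_pair Y 2 T lam \<gamma> u"
    unfolding extremal_pair_def
  proof (intro conjI)
    show "admissible Y 2 T \<gamma> u" by (rule adm)
    show "abs_cont_on {0..T} lam" unfolding lam_def by (rule ac_constant)
    show "\<forall>t\<in>{0..T}. lam t \<noteq> 0" by (simp add: lam_def zero_prod_def)
    show "AE t in lebesgue_on {0..T}. \<exists>g.
        ((\<lambda>p. ctrlH Y 2 (lam t) p (\<lambda>i. u i t)) has_derivative (\<lambda>h. inner g h)) (at (\<gamma> t)) \<and>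
        (lam has_vector_derivative (- g)) (at t)"
    proof (rule AE_I2)
      fix t assume "t \<in> space (lebesgue_on {0..T})"
      then have t: "t \<in> {0..T}" by simp
      have y0: "fst (snd (\<gamma> t)) = 0" using line t by auto
      have "((\<lambda>p. ctrlH Y 2 (lam t) p (\<lambda>i. u i t)) has_derivative (\<lambda>h. inner 0 h)) (at (\<gamma> t))"
        using H_deriv[of "lam t" "\<lambda>i. u i t" "\<gamma> t"] y0 by simp
      moreover have "(lam has_vector_derivative (- 0)) (at t)"
        unfolding lam_def by (simp add: has_vector_derivative_const)
      ultimately show "\<exists>g. ((\<lambda>p. ctrlH Y 2 (lam t) p (\<lambda>i. u i t)) has_derivative (\<lambda>h. inner g h)) (at (\<gamma> t)) \<and>
        (lam has_vector_derivative (- g)) (at t)" by blast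
    qed
    show "\<exists>lam0\<ge>0. AE t in lebesgue_on {0..T}.
        (\<Sum>i<2. u i t * inner (lam t) (Y i (\<gamma> t))) = (\<Sum>i<2. \<bar>inner (lam t) (Y i (\<gamma> t))\<bar>) \<and>
        (\<Sum>i<2. \<bar>inner (lam t) (Y i (\<gamma> t))\<bar>) = lam0"
    proof (rule exI[of _ 0], rule conjI[OF order_refl], rule AE_I2)
      fix t assume "t \<in> space (lebesgue_on {0..T})"
      then have t: "t \<in> {0..T}" by simp
      have y0: "fst (snd (\<gamma> t)) = 0" using line t by auto
      have i0: "inner (lam t) (Y i (\<gamma> t)) = 0" for i
        unfolding lam_def inner_Y_001 y0 by simp
      show "(\<Sum>i<2. u i t * inner (lam t) (Y i (\<gamma> t))) = (\<Sum>i<2. \<bar>inner (lam t) (Y i (\<gamma> t))\<bar>) \<and>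
        (\<Sum>i<2. \<bar>inner (lam t) (Y i (\<gamma> t))\<bar>) = 0" by (simp add: i0)
    qed
  qed
  have "abnormal_arc Y 2 T lam \<gamma> u 0 T"
    unfolding abnormal_arc_def
  proof (intro conjI ep order_refl T ballI allI impI)
    fix t j assume t: "t \<in> {0<..<T}" and j: "j < (2::nat)"
    have y0: "fst (snd (\<gamma> t)) = 0" using line t by auto
    show "switching Y lam \<gamma> j t = 0"
      unfolding switching_def lam_def inner_Y_001 y0 by simp
  qed
  then show ?thesis by blast
qed


theorem mainTheorem12:
  shows "(\<forall>T lam \<gamma> u a b.
            abnormal_arc Y 2 T lam \<gamma> u a b \<and> \<not> (\<exists>c. \<forall>t\<in>{a<..<b}. \<gamma> t = c) \<longrightarrow>
              (AE t in lebesgue_on {a<..<b}. u 0 t = u 1 t) \<and>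
              (\<exists>z0::real. \<forall>t\<in>{a<..<b}. fst (snd (\<gamma> t)) = 0 \<and> snd (snd (\<gamma> t)) = z0))
       \<and>
         (\<forall>T \<gamma> u (z0::real).
            admissible Y 2 T \<gamma> u \<and> 0 < T \<and>
            (\<forall>t\<in>{0..T}. fst (snd (\<gamma> t)) = 0 \<and> snd (snd (\<gamma> t)) = z0) \<longrightarrow>
              (\<exists>lam. abnormal_arc Y 2 T lam \<gamma> u 0 T))"
proof (rule conjI; intro allI impI)
  fix T lam \<gamma> u a b
  assume "abnormal_arc Y 2 T lam \<gamma> u a b \<and> \<not> (\<exists>c. \<forall>t\<in>{a<..<b}. \<gamma> t = c)"
  then show "(AE t in lebesgue_on {a<..<b}. u 0 t = u 1 t) \<and>
              (\<exists>z0::real. \<forall>t\<in>{a<..<b}. fst (snd (\<gamma> t)) = 0 \<and> snd (snd (\<gamma> t)) = z0)"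
    using part1 by blast
next
  fix T \<gamma> u and z0 :: real
  assume "admissible Y 2 T \<gamma> u \<and> 0 < T \<and>
            (\<forall>t\<in>{0..T}. fst (snd (\<gamma> t)) = 0 \<and> snd (snd (\<gamma> t)) = z0)"
  then show "\<exists>lam. abnormal_arc Y 2 T lam \<gamma> u 0 T"
    using part2 by blast
qed

end
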